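(* Let $n>1$ be an integer. Then \[ \mathrm{SL}_2(\mathbb{Z}[1/n])^{\mathrm{ab}} \simeq \begin{cases} 0 & \text{if } 2\mid n,\ 3\mid n,\\ \mathbb{Z}/3 & \text{if } 2\mid n,\ 3\nmid n,\\ \mathbb{Z}/4 & \text{if } 2\nmid n,\ 3\mid n,\\ \mathbb{Z}/12 & \text{if } 2\nmid n,\ 3\nmid n. \end{cases} \]
   Context: For a group $G$, $G^{\mathrm{ab}}=G/[G,G]$; $\mathbb{Z}[1/n]$ is the subring of $\mathbb{Q}$ generated by $1/n$. *)

theory Defs
  imports "HOL-Analysis.Analysis" "HOL-Algebra.Algebra"
begin

definition Zinv :: "nat \<Rightarrow> rat set" where
  "Zinv n = {q. \<exists>(a::int) (k::nat). q = of_int a / of_nat n ^ k}"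

definition SL2_Zinv :: "nat \<Rightarrow> (rat ^ 2 ^ 2) monoid" where
  "SL2_Zinv n = \<lparr> carrier = {A. (\<forall>i j. A $ i $ j \<in> Zinv n) \<and> det A = 1},
                  mult = (\<lambda>A B. A ** B),
                  one = mat 1 \<rparr>"

definition abelianization :: "('a, 'b) monoid_scheme \<Rightarrow> 'a set monoid" where
  "abelianization G = G Mod (derived G (carrier G))"

end

theory Submission
  imports Defs "HOL-Number_Theory.Cong"
begin


definition mk :: "rat \<Rightarrow> rat \<Rightarrow> rat \<Rightarrow> rat \<Rightarrow> rat^2^2" where
  "mk a b c d = (\<chi> i j. if i = 1 then (if j = 1 then a else b) else (if j = 1 then c else d))"

lemma two_ne_one_2: "(2::2) \<noteq> 1" by simp

lemma mk_nth[simp]: "mk a b c d $ 1 $ 1 = a" "mk a b c d $ 1 $ 2 = b"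
  "mk a b c d $ 2 $ 1 = c" "mk a b c d $ 2 $ 2 = d"
  by (simp_all add: mk_def)

lemma mk_eta: "A = mk (A$1$1) (A$1$2) (A$2$1) (A$2$2)"
  by (simp add: mk_def vec_eq_iff forall_2)

lemma mk_mult: "mk a b c d ** mk e f g h = mk (a * e+b * g) (a * f+b * h) (c * e+d * g) (c * f+d * h)"
  by (simp add: matrix_matrix_mult_def mk_def vec_eq_iff forall_2 sum_2)

lemma mk_det: "det (mk a b c d) = a * d - b * c" by (simp add: det_2)

lemma mat1_mk: "mat 1 = mk 1 0 0 1" by (simp add: mat_def mk_def vec_eq_iff forall_2)

lemma mk_eq: "mk a b c d = mk e f g h \<longleftrightarrow> a=e \<and> b=f \<and> c=g \<and> d=h"
  by (metis mk_nth)

lemma Zinv_int[simp]: "of_int a \<in> Zinv n"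
  unfolding Zinv_def by (rule CollectI, rule exI[of _ a], rule exI[of _ 0], simp)

lemma Zinv_nat[simp]: "of_nat a \<in> Zinv n"
  using Zinv_int[of "int a" n] by simp

lemma Zinv_0[simp]: "0 \<in> Zinv n" using Zinv_int[of 0 n] by simp
lemma Zinv_1[simp]: "1 \<in> Zinv n" using Zinv_int[of 1 n] by simp
lemma Zinv_numeral[simp]: "numeral k \<in> Zinv n" using Zinv_int[of "numeral k" n] by simp

lemma ZinvE: assumes "x \<in> Zinv n" obtains a k where "x = of_int a / of_nat n ^ k"
  using assms unfolding Zinv_def by blast

lemma ZinvI: "x = of_int a / of_nat n ^ k \<Longrightarrow> x \<in> Zinv n"
  unfolding Zinv_def by blast

lemma Zinv_add[simp]: assumes "n > 0" "x \<in> Zinv n" "y \<in> Zinv n" shows "x + y \<in> Zinv n"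
proof -
  obtain a k where x: "x = of_int a / of_nat n ^ k" using assms(2) by (rule ZinvE)
  obtain b l where y: "y = of_int b / of_nat n ^ l" using assms(3) by (rule ZinvE)
  have "x + y = of_int (a * int n ^ l + b * int n ^ k) / of_nat n ^ (k + l)"
    using assms(1) by (simp add: x y field_simps power_add)
  then show ?thesis by (rule ZinvI)
qed

lemma Zinv_mult[simp]: assumes "x \<in> Zinv n" "y \<in> Zinv n" shows "x * y \<in> Zinv n"
proof -
  obtain a k where x: "x = of_int a / of_nat n ^ k" using assms(1) by (rule ZinvE)
  obtain b l where y: "y = of_int b / of_nat n ^ l" using assms(2) by (rule ZinvE)
  have "x * y = of_int (a * b) / of_nat n ^ (k + l)"
    by (simp add: x y power_add)
  then show ?thesis by (rule ZinvI)
qed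

lemma Zinv_uminus[simp]: assumes "x \<in> Zinv n" shows "- x \<in> Zinv n"
proof -
  have "-x = of_int (-1) * x" by simp
  then show ?thesis using assms Zinv_mult[OF Zinv_int[of "-1"] assms] by simp
qed

lemma Zinv_diff[simp]: assumes "n > 0" "x \<in> Zinv n" "y \<in> Zinv n" shows "x - y \<in> Zinv n"
  using Zinv_add[OF assms(1,2) Zinv_uminus[OF assms(3)]] by simp

lemma Zinv_invpow[simp]: "1 / of_nat n ^ k \<in> Zinv n"
  by (rule ZinvI[of _ 1], simp)

lemma Zinv_pow[simp]: "of_nat n ^ k \<in> Zinv n"
  using Zinv_nat[of "n^k" n] by simp

lemma carrier_SL: "A \<in> carrier (SL2_Zinv n) \<longleftrightarrow>
   A$1$1 \<in> Zinv n \<and> A$1$2 \<in> Zinv n \<and> A$2$1 \<in> Zinv n \<and> A$2$2 \<in> Zinv n \<and>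
   A$1$1 * A$2$2 - A$1$2 * A$2$1 = 1"
  by (auto simp add: SL2_Zinv_def forall_2 det_2)

lemma carrier_mk: "mk a b c d \<in> carrier (SL2_Zinv n) \<longleftrightarrow>
   a \<in> Zinv n \<and> b \<in> Zinv n \<and> c \<in> Zinv n \<and> d \<in> Zinv n \<and> a * d - b * c = 1"
  by (simp add: carrier_SL)

lemma mult_SL[simp]: "A \<otimes>\<^bsub>SL2_Zinv n\<^esub> B = A ** B" by (simp add: SL2_Zinv_def)
lemma one_SL[simp]: "\<one>\<^bsub>SL2_Zinv n\<^esub> = mat 1" by (simp add: SL2_Zinv_def)

lemma carrier_SL_mk: "A \<in> carrier (SL2_Zinv n) \<Longrightarrow>
   \<exists>a b c d. A = mk a b c d \<and> a \<in> Zinv n \<and> b \<in> Zinv n \<and> c \<in> Zinv n \<and> d \<in> Zinv n \<and> a * d - b * c = 1"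
  by (metis carrier_SL mk_eta)

lemma SL_group: assumes "n > 0" shows "group (SL2_Zinv n)"
proof (rule groupI)
  fix x y assume "x \<in> carrier (SL2_Zinv n)" "y \<in> carrier (SL2_Zinv n)"
  then obtain a b c d e f g h where x: "x = mk a b c d" and y: "y = mk e f g h"
    and h: "a \<in> Zinv n" "b \<in> Zinv n" "c \<in> Zinv n" "d \<in> Zinv n" "a * d - b * c = 1"
    "e \<in> Zinv n" "f \<in> Zinv n" "g \<in> Zinv n" "h \<in> Zinv n" "e * h - f * g = 1"
    by (metis carrier_SL_mk)
  have "(a * e+b * g) * (c * f+d * h) - (a * f+b * h) * (c * e+d * g) = (a * d - b * c) * (e * h - f * g)"
    by (simp add: algebra_simps)
  then show "x \<otimes>\<^bsub>SL2_Zinv n\<^esub> y \<in> carrier (SL2_Zinv n)"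
    using h assms by (simp add: x y mk_mult carrier_mk)
next
  show "\<one>\<^bsub>SL2_Zinv n\<^esub> \<in> carrier (SL2_Zinv n)" by (simp add: mat1_mk carrier_mk)
next
  fix x y z show "x \<otimes>\<^bsub>SL2_Zinv n\<^esub> y \<otimes>\<^bsub>SL2_Zinv n\<^esub> z = x \<otimes>\<^bsub>SL2_Zinv n\<^esub> (y \<otimes>\<^bsub>SL2_Zinv n\<^esub> z)"
    by (simp add: matrix_mul_assoc)
next
  fix x show "\<one>\<^bsub>SL2_Zinv n\<^esub> \<otimes>\<^bsub>SL2_Zinv n\<^esub> x = x" by simp
next
  fix x assume "x \<in> carrier (SL2_Zinv n)"
  then obtain a b c d where x: "x = mk a b c d"
    and h: "a \<in> Zinv n" "b \<in> Zinv n" "c \<in> Zinv n" "d \<in> Zinv n" "a * d - b * c = 1"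
    by (metis carrier_SL_mk)
  have "mk d (-b) (-c) a \<in> carrier (SL2_Zinv n)" using h by (simp add: carrier_mk algebra_simps)
  moreover have "mk d (-b) (-c) a ** x = mat 1" using h
    by (simp add: x mk_mult mat1_mk algebra_simps)
  ultimately show "\<exists>y\<in>carrier (SL2_Zinv n). y \<otimes>\<^bsub>SL2_Zinv n\<^esub> x = \<one>\<^bsub>SL2_Zinv n\<^esub>" by auto
qed


definition chi3 :: "int \<Rightarrow> int \<Rightarrow> int \<Rightarrow> int \<Rightarrow> int" where
  "chi3 a b c d = (b * d * (1 - c ^ 2) + (a + d) * c) mod 3"

definition chi4 :: "int \<Rightarrow> int \<Rightarrow> int \<Rightarrow> int \<Rightarrow> int" where
  "chi4 a b c d = (if odd c then c * (a + d + 1) else b * d + 1 - a + c * (b + 1)) mod 4"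

definition chi :: "nat \<Rightarrow> int \<Rightarrow> int \<Rightarrow> int \<Rightarrow> int \<Rightarrow> int" where
  "chi M a b c d = (if M = 3 then chi3 a b c d else chi4 a b c d)"

lemma chi_range: "M = 3 \<or> M = 4 \<Longrightarrow> 0 \<le> chi M a b c d \<and> chi M a b c d < int M"
  by (auto simp: chi_def chi3_def chi4_def)

lemma chi_id: "M = 3 \<or> M = 4 \<Longrightarrow> chi M 1 0 0 1 = 0"
  by (auto simp: chi_def chi3_def chi4_def)

lemma odd_cong4: "[c = c'] (mod 4) \<Longrightarrow> odd (c::int) \<longleftrightarrow> odd c'"
  unfolding cong_def by presburger

lemma chi_cong:
  assumes M: "M = 3 \<or> M = 4"
    and "[a = a'] (mod int M)" "[b = b'] (mod int M)" "[c = c'] (mod int M)" "[d = d'] (mod int M)"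
  shows "chi M a b c d = chi M a' b' c' d'"
proof (cases "M = 3")
  case True
  have "[b * d * (1 - c ^ 2) + (a + d) * c = b' * d' * (1 - c' ^ 2) + (a' + d') * c'] (mod 3)"
    using assms True by (intro cong_add cong_mult cong_diff cong_pow cong_refl) auto
  then show ?thesis using True by (simp add: chi_def chi3_def cong_def)
next
  case False
  then have M4: "M = 4" using M by auto
  have o: "odd c \<longleftrightarrow> odd c'" using assms M4 odd_cong4 by auto
  have 1: "[c * (a + d + 1) = c' * (a' + d' + 1)] (mod 4)"
    using assms M4 by (intro cong_add cong_mult cong_diff cong_pow cong_refl) auto
  have 2: "[b * d + 1 - a + c * (b + 1) = b' * d' + 1 - a' + c' * (b' + 1)] (mod 4)"
    using assms M4 by (intro cong_add cong_mult cong_diff cong_pow cong_refl) auto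
  show ?thesis using 1 2 o M4 by (simp add: chi_def chi4_def cong_def)
qed

lemma res3: "0 \<le> (x::int) \<Longrightarrow> x < 3 \<Longrightarrow> x \<in> {0,1,2}" by auto
lemma res4: "0 \<le> (x::int) \<Longrightarrow> x < 4 \<Longrightarrow> x \<in> {0,1,2,3}" by auto

lemma fin3E: "\<forall>a\<in>{0,1,2::int}. \<forall>b\<in>{0,1,2::int}. \<forall>c\<in>{0,1,2::int}. \<forall>d\<in>{0,1,2::int}.
   (a * d - b * c) mod 3 = 1 \<longrightarrow> chi3 a (a + b) c (c + d) = (chi3 a b c d + 1) mod 3"
  by (simp add: chi3_def)
lemma fin3F: "\<forall>a\<in>{0,1,2::int}. \<forall>b\<in>{0,1,2::int}. \<forall>c\<in>{0,1,2::int}. \<forall>d\<in>{0,1,2::int}.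
   (a * d - b * c) mod 3 = 1 \<longrightarrow> chi3 (a + b) b (c + d) d = (chi3 a b c d - 1) mod 3"
  by (simp add: chi3_def)
lemma fin4E: "\<forall>a\<in>{0,1,2,3::int}. \<forall>b\<in>{0,1,2,3::int}. \<forall>c\<in>{0,1,2,3::int}. \<forall>d\<in>{0,1,2,3::int}.
   (a * d - b * c) mod 4 = 1 \<longrightarrow> chi4 a (a + b) c (c + d) = (chi4 a b c d + 1) mod 4"
  by (simp add: chi4_def)
lemma fin4F: "\<forall>a\<in>{0,1,2,3::int}. \<forall>b\<in>{0,1,2,3::int}. \<forall>c\<in>{0,1,2,3::int}. \<forall>d\<in>{0,1,2,3::int}.
   (a * d - b * c) mod 4 = 1 \<longrightarrow> chi4 (a + b) b (c + d) d = (chi4 a b c d - 1) mod 4"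
  by (simp add: chi4_def)

lemma chi_stepE:
  assumes M: "M = 3 \<or> M = 4" and det: "[a * d - b * c = 1] (mod int M)"
  shows "chi M a (a + b) c (c + d) = (chi M a b c d + 1) mod int M"
proof -
  define a' b' c' d' where "a' = a mod int M" "b' = b mod int M" "c' = c mod int M" "d' = d mod int M"
  have ca: "[a = a'] (mod int M)" "[b = b'] (mod int M)" "[c = c'] (mod int M)" "[d = d'] (mod int M)"
    by (simp_all add: a'_b'_c'_d'_def cong_def)
  have e1: "chi M a (a + b) c (c + d) = chi M a' (a' + b') c' (c' + d')"
    using ca M by (intro chi_cong cong_add) auto
  have e2: "chi M a b c d = chi M a' b' c' d'"
    using ca M by (intro chi_cong) auto
  have "[a' * d' - b' * c' = a * d - b * c] (mod int M)"
    using ca by (intro cong_diff cong_mult) (auto simp: cong_sym)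
  then have dd: "(a' * d' - b' * c') mod int M = 1"
    using det M by (auto simp: cong_def)
  have r: "0 \<le> a'" "a' < int M" "0 \<le> b'" "b' < int M" "0 \<le> c'" "c' < int M" "0 \<le> d'" "d' < int M"
    using M by (auto simp: a'_b'_c'_d'_def)
  show ?thesis
  proof (cases "M = 3")
    case True
    have r3: "0 \<le> a'" "a' < 3" "0 \<le> b'" "b' < 3" "0 \<le> c'" "c' < 3" "0 \<le> d'" "d' < 3"
      using r True by simp_all
    show ?thesis using True using fin3E[rule_format, OF res3[OF r3(1,2)] res3[OF r3(3,4)] res3[OF r3(5,6)] res3[OF r3(7,8)]] dd unfolding e1 e2 by (simp add: chi_def)
  next
    case False
    then have M4: "M = 4" using M by auto
    have r4: "0 \<le> a'" "a' < 4" "0 \<le> b'" "b' < 4" "0 \<le> c'" "c' < 4" "0 \<le> d'" "d' < 4"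
      using r M4 by simp_all
    show ?thesis using M4 using fin4E[rule_format, OF res4[OF r4(1,2)] res4[OF r4(3,4)] res4[OF r4(5,6)] res4[OF r4(7,8)]] dd unfolding e1 e2 by (simp add: chi_def)
  qed
qed

lemma chi_stepF:
  assumes M: "M = 3 \<or> M = 4" and det: "[a * d - b * c = 1] (mod int M)"
  shows "chi M (a + b) b (c + d) d = (chi M a b c d - 1) mod int M"
proof -
  define a' b' c' d' where "a' = a mod int M" "b' = b mod int M" "c' = c mod int M" "d' = d mod int M"
  have ca: "[a = a'] (mod int M)" "[b = b'] (mod int M)" "[c = c'] (mod int M)" "[d = d'] (mod int M)"
    by (simp_all add: a'_b'_c'_d'_def cong_def)
  have e1: "chi M (a + b) b (c + d) d = chi M (a' + b') b' (c' + d') d'"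
    using ca M by (intro chi_cong cong_add) auto
  have e2: "chi M a b c d = chi M a' b' c' d'"
    using ca M by (intro chi_cong) auto
  have "[a' * d' - b' * c' = a * d - b * c] (mod int M)"
    using ca by (intro cong_diff cong_mult) (auto simp: cong_sym)
  then have dd: "(a' * d' - b' * c') mod int M = 1"
    using det M by (auto simp: cong_def)
  have r: "0 \<le> a'" "a' < int M" "0 \<le> b'" "b' < int M" "0 \<le> c'" "c' < int M" "0 \<le> d'" "d' < int M"
    using M by (auto simp: a'_b'_c'_d'_def)
  show ?thesis
  proof (cases "M = 3")
    case True
    have r3: "0 \<le> a'" "a' < 3" "0 \<le> b'" "b' < 3" "0 \<le> c'" "c' < 3" "0 \<le> d'" "d' < 3"
      using r True by simp_all
    show ?thesis using True using fin3F[rule_format, OF res3[OF r3(1,2)] res3[OF r3(3,4)] res3[OF r3(5,6)] res3[OF r3(7,8)]] dd unfolding e1 e2 by (simp add: chi_def)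
  next
    case False
    then have M4: "M = 4" using M by auto
    have r4: "0 \<le> a'" "a' < 4" "0 \<le> b'" "b' < 4" "0 \<le> c'" "c' < 4" "0 \<le> d'" "d' < 4"
      using r M4 by simp_all
    show ?thesis using M4 using fin4F[rule_format, OF res4[OF r4(1,2)] res4[OF r4(3,4)] res4[OF r4(5,6)] res4[OF r4(7,8)]] dd unfolding e1 e2 by (simp add: chi_def)
  qed
qed


definition redP :: "nat \<Rightarrow> nat \<Rightarrow> rat \<Rightarrow> int \<Rightarrow> bool" where
  "redP M n x r \<longleftrightarrow> (\<forall>a k. x = of_int a / of_nat n ^ k \<longrightarrow> [a = r * int n ^ k] (mod int M))"

definition red :: "nat \<Rightarrow> nat \<Rightarrow> rat \<Rightarrow> int" where
  "red M n x = (SOME r. redP M n x r)"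

lemma rep_eq:
  assumes "n > 0" "of_int a / of_nat n ^ k = (of_int b / of_nat n ^ l :: rat)"
  shows "a * int n ^ l = b * int n ^ k"
proof -
  have "of_int a * of_nat n ^ l = (of_int b * of_nat n ^ k :: rat)"
    using assms by (simp add: field_simps)
  then have "of_int (a * int n ^ l) = (of_int (b * int n ^ k) :: rat)" by simp
  then show ?thesis by (simp only: of_int_eq_iff)
qed

lemma redP_ex:
  assumes n: "n > 0" and cop: "coprime (int n) (int M)" and x: "x \<in> Zinv n"
  shows "\<exists>r. redP M n x r"
proof -
  obtain a0 k0 where x0: "x = of_int a0 / of_nat n ^ k0" using x by (rule ZinvE)
  obtain t where t: "[int n * t = 1] (mod int M)" using cong_solve_coprime_int[OF cop] by blast
  have "redP M n x (a0 * t ^ k0)"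
    unfolding redP_def
  proof (intro allI impI)
    fix a k assume "x = of_int a / of_nat n ^ k"
    then have e: "a0 * int n ^ k = a * int n ^ k0" using rep_eq[OF n] x0 by metis
    have "[(int n * t) ^ k0 = 1 ^ k0] (mod int M)" by (rule cong_pow[OF t])
    then have "[a * (int n * t) ^ k0 = a * 1] (mod int M)" by (intro cong_scalar_left) simp
    moreover have "a * (int n * t) ^ k0 = a0 * t ^ k0 * int n ^ k"
      using e by (simp add: power_mult_distrib algebra_simps)
    ultimately show "[a = a0 * t ^ k0 * int n ^ k] (mod int M)" by (simp add: cong_sym)
  qed
  then show ?thesis by blast
qed

locale redloc =
  fixes M n :: nat
  assumes n: "n > 0" and cop: "coprime (int n) (int M)"
begin

abbreviation "r \<equiv> red M n"

lemma red_spec: "x \<in> Zinv n \<Longrightarrow> x = of_int a / of_nat n ^ k \<Longrightarrow> [a = r x * int n ^ k] (mod int M)"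
  using someI_ex[OF redP_ex[OF n cop]] unfolding red_def redP_def by blast

lemma cop_pow: "coprime (int n ^ k) (int M)"
  using cop by simp

lemma cancel: "[u * int n ^ k = v * int n ^ k] (mod int M) \<Longrightarrow> [u = v] (mod int M)"
  using cong_mult_rcancel[OF cop_pow] by blast

lemma red_add: assumes "x \<in> Zinv n" "y \<in> Zinv n" shows "[r (x + y) = r x + r y] (mod int M)"
proof -
  obtain a k where x: "x = of_int a / of_nat n ^ k" using assms(1) by (rule ZinvE)
  obtain b l where y: "y = of_int b / of_nat n ^ l" using assms(2) by (rule ZinvE)
  have xy: "x + y = of_int (a * int n ^ l + b * int n ^ k) / of_nat n ^ (k + l)"
    using n by (simp add: x y field_simps power_add)
  have 1: "[a * int n ^ l + b * int n ^ k = r (x + y) * int n ^ (k + l)] (mod int M)"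
    using red_spec[OF _ xy] assms n by simp
  have "[a * int n ^ l + b * int n ^ k = r x * int n ^ k * int n ^ l + r y * int n ^ l * int n ^ k] (mod int M)"
    using red_spec[OF assms(1) x] red_spec[OF assms(2) y]
    by (intro cong_add cong_scalar_right)
  then have 2: "[a * int n ^ l + b * int n ^ k = (r x + r y) * int n ^ (k + l)] (mod int M)"
    by (simp add: algebra_simps power_add)
  show ?thesis by (rule cancel[of _ "k + l"], rule cong_trans[OF cong_sym[OF 1] 2])
qed

lemma red_mult: assumes "x \<in> Zinv n" "y \<in> Zinv n" shows "[r (x * y) = r x * r y] (mod int M)"
proof -
  obtain a k where x: "x = of_int a / of_nat n ^ k" using assms(1) by (rule ZinvE)
  obtain b l where y: "y = of_int b / of_nat n ^ l" using assms(2) by (rule ZinvE)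
  have xy: "x * y = of_int (a * b) / of_nat n ^ (k + l)"
    by (simp add: x y power_add)
  have 1: "[a * b = r (x * y) * int n ^ (k + l)] (mod int M)"
    using red_spec[OF _ xy] assms by simp
  have "[a * b = (r x * int n ^ k) * (r y * int n ^ l)] (mod int M)"
    using red_spec[OF assms(1) x] red_spec[OF assms(2) y]
    by (intro cong_mult)
  then have 2: "[a * b = (r x * r y) * int n ^ (k + l)] (mod int M)"
    by (simp add: algebra_simps power_add)
  show ?thesis by (rule cancel[of _ "k + l"], rule cong_trans[OF cong_sym[OF 1] 2])
qed

lemma red_int: "[r (of_int z) = z] (mod int M)"
  using red_spec[of "of_int z" z 0] by (simp add: cong_sym)

lemma red_diff: assumes "x \<in> Zinv n" "y \<in> Zinv n" shows "[r (x - y) = r x - r y] (mod int M)"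
proof -
  have m: "- y \<in> Zinv n" using assms by simp
  have e: "-y = of_int (-1) * y" by simp
  have 1: "[r (-y) = r (of_int (-1)) * r y] (mod int M)"
    unfolding e by (rule red_mult[OF Zinv_int assms(2)])
  have 2: "[r (of_int (-1)) * r y = (-1) * r y] (mod int M)" by (intro cong_scalar_right red_int)
  from cong_trans[OF 1 2] have "[r (-y) = - r y] (mod int M)" by simp
  then have "[r x + r (-y) = r x - r y] (mod int M)" using cong_add[OF cong_refl] by fastforce
  then show ?thesis using red_add[OF assms(1) m] by (metis cong_trans diff_conv_add_uminus)
qed

end


lemma cop3: assumes "\<not> 3 dvd (n::nat)" shows "coprime (int n) 3"
proof (rule coprimeI)
  fix c :: int assume c: "c dvd int n" "c dvd 3"
  have d: "c dvd int n mod 3" using c by (simp add: dvd_mod_iff)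
  have "\<not> 3 dvd int n" using assms by (metis int_dvd_int_iff of_nat_numeral)
  then have "int n mod 3 \<noteq> 0" by auto
  moreover have "0 \<le> int n mod 3" "int n mod 3 < 3" by simp_all
  ultimately have "int n mod 3 = 1 \<or> int n mod 3 = 2" by linarith
  then show "is_unit c"
  proof
    assume "int n mod 3 = 1" then show ?thesis using d by simp
  next
    assume "int n mod 3 = 2" then have "c dvd 2" using d by simp
    then have "c dvd 3 - 2" using c(2) by (rule dvd_diff[rotated])
    then show ?thesis by simp
  qed
qed
lemma cop4: assumes "odd (n::nat)" shows "coprime (int n) 4"
proof (rule coprimeI)
  fix c :: int assume c: "c dvd int n" "c dvd 4"
  have d: "c dvd int n mod 4" using c by (simp add: dvd_mod_iff)
  have "odd (int n)" using assms by simp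
  then have "int n mod 2 = 1" by presburger
  then have x: "int n mod 4 mod 2 = 1" by (simp add: mod_mod_cancel)
  have "0 \<le> int n mod 4" "int n mod 4 < 4" by simp_all
  then have "int n mod 4 \<in> {0,1,2,3}" by auto
  then have "int n mod 4 = 1 \<or> int n mod 4 = 3" using x by auto
  then show "is_unit c"
  proof
    assume "int n mod 4 = 1" then show ?thesis using d by simp
  next
    assume "int n mod 4 = 3" then have "c dvd 3" using d by simp
    then have "c dvd 4 - 3" using c(2) by (rule dvd_diff[rotated])
    then show ?thesis by simp
  qed
qed
lemma arith12: fixes p q r s :: int
  shows "(-8 * ((p + q) mod 3) + 9 * ((r + s) mod 4)) mod 12 = ((-8 * p + 9 * r) mod 12 + (-8 * q + 9 * s) mod 12) mod 12"
proof -
  have 1: "(p + q) mod 3 = (p + q) - 3 * ((p + q) div 3)" using minus_mult_div_eq_mod[of "p + q" 3] by simp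
  have 2: "(r + s) mod 4 = (r + s) - 4 * ((r + s) div 4)" using minus_mult_div_eq_mod[of "r + s" 4] by simp
  have "-8 * ((p + q) mod 3) + 9 * ((r + s) mod 4) = (-8 * p + 9 * r + (-8 * q + 9 * s)) + 12 * (2 * ((p + q) div 3) - 3 * ((r + s) div 4))"
    unfolding 1 2 by (simp add: algebra_simps)
  then have "(-8 * ((p + q) mod 3) + 9 * ((r + s) mod 4)) mod 12 = (-8 * p + 9 * r + (-8 * q + 9 * s)) mod 12"
    by (simp only: mod_mult_self2)
  also have "\<dots> = ((-8 * p + 9 * r) mod 12 + (-8 * q + 9 * s) mod 12) mod 12" by (simp add: mod_add_eq)
  finally show ?thesis .
qed


definition E :: "rat \<Rightarrow> rat^2^2" where "E x = mk 1 x 0 1"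
definition F :: "rat \<Rightarrow> rat^2^2" where "F x = mk 1 0 x 1"
definition H :: "rat \<Rightarrow> rat^2^2" where "H u = mk u 0 0 (1 / u)"
definition W1 :: "rat^2^2" where "W1 = mk 0 1 (-1) 0"
definition Wm :: "rat^2^2" where "Wm = mk 0 (-1) 1 0"

definition mu :: "nat \<Rightarrow> rat \<Rightarrow> nat" where
  "mu n x = (LEAST m. \<exists>k. \<bar>x\<bar> * of_nat n ^ k = of_nat m)"

lemma mu_swap: "mu n (y - x) = mu n (x - y)"
proof -
  have "\<bar>y - x\<bar> = \<bar>x - y\<bar>" by (rule abs_minus_commute)
  then show ?thesis unfolding mu_def by (simp only:)
qed

lemma mu_le: "\<bar>x\<bar> * of_nat n ^ k = of_nat m \<Longrightarrow> mu n x \<le> m"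
  unfolding mu_def by (rule Least_le) blast

lemma mu_wit: assumes "x \<in> Zinv n" shows "\<exists>k. \<bar>x\<bar> * of_nat n ^ k = of_nat (mu n x)"
proof -
  obtain a k where x: "x = of_int a / of_nat n ^ k" using assms by (rule ZinvE)
  have "\<exists>m k. \<bar>x\<bar> * of_nat n ^ k = of_nat m"
  proof (cases "n = 0")
    case True
    then show ?thesis by (intro exI[of _ 0] exI[of _ 1]) simp
  next
    case False
    have "\<bar>x\<bar> * of_nat n ^ k = of_int \<bar>a\<bar>" using False by (simp add: x abs_divide)
    also have "\<dots> = of_nat (nat \<bar>a\<bar>)" by simp
    finally show ?thesis by blast
  qed
  then show ?thesis unfolding mu_def by (rule LeastI_ex)
qed

lemma mu_0: assumes "n > 0" "x \<in> Zinv n" "mu n x = 0" shows "x = 0"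
  using mu_wit[OF assms(2)] assms by auto

lemma euclid:
  assumes n: "n > 0" and a: "a \<in> Zinv n" and c: "c \<in> Zinv n" and c0: "c \<noteq> 0"
  shows "\<exists>q \<in> Zinv n. mu n (a - q * c) < mu n c"
proof -
  obtain k where k: "\<bar>c\<bar> * of_nat n ^ k = of_nat (mu n c)" using mu_wit[OF c] by blast
  define m where "m = mu n c"
  have m0: "m > 0" using mu_0[OF n c] c0 m_def by auto
  define c1 :: int where "c1 = (if c > 0 then int m else - int m)"
  have c1: "c * of_nat n ^ k = of_int c1"
    using k c0 unfolding c1_def m_def by (cases "c > 0") auto
  have c10: "c1 \<noteq> 0" "\<bar>c1\<bar> = int m" using m0 by (auto simp: c1_def)
  obtain a0 j where a0: "a = of_int a0 / of_nat n ^ j" using a by (rule ZinvE)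
  define q :: rat where "q = (of_int (a0 div c1) * of_nat n ^ k) * (1 / of_nat n ^ j)"
  have q: "q \<in> Zinv n" unfolding q_def by (intro Zinv_mult Zinv_int Zinv_pow Zinv_invpow)
  have "q * c = of_int (a0 div c1) * (c * of_nat n ^ k) / of_nat n ^ j"
    by (simp add: q_def)
  also have "\<dots> = of_int (a0 div c1 * c1) / of_nat n ^ j" by (simp add: c1)
  finally have "a - q * c = (of_int a0 - of_int (a0 div c1 * c1)) / of_nat n ^ j"
    by (simp add: a0 diff_divide_distrib)
  also have "\<dots> = of_int (a0 mod c1) / of_nat n ^ j"
    by (metis minus_div_mult_eq_mod of_int_diff)
  finally have e: "a - q * c = of_int (a0 mod c1) / of_nat n ^ j" .
  have "\<bar>a - q * c\<bar> * of_nat n ^ j = of_int \<bar>a0 mod c1\<bar>"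
    using n by (simp add: e abs_divide)
  also have "\<dots> = of_nat (nat \<bar>a0 mod c1\<bar>)" by simp
  finally have "mu n (a - q * c) \<le> nat \<bar>a0 mod c1\<bar>" by (rule mu_le)
  also have "nat \<bar>a0 mod c1\<bar> < m" using abs_mod_less[OF c10(1), of a0] c10(2) by linarith
  finally show ?thesis using q m_def by blast
qed

locale SLn =
  fixes n :: nat
  assumes n1: "n > 1"
begin

lemma n0: "n > 0" using n1 by simp

sublocale grp: group "SL2_Zinv n" by (rule SL_group[OF n0])

definition gens :: "(rat^2^2) set" where
  "gens = {E x | x. x \<in> Zinv n} \<union> {F x | x. x \<in> Zinv n}"

abbreviation "S \<equiv> generate (SL2_Zinv n) gens"

lemma E_in[simp]: "x \<in> Zinv n \<Longrightarrow> E x \<in> carrier (SL2_Zinv n)"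
  by (simp add: E_def carrier_mk)
lemma F_in[simp]: "x \<in> Zinv n \<Longrightarrow> F x \<in> carrier (SL2_Zinv n)"
  by (simp add: F_def carrier_mk)
lemma W1_in[simp]: "W1 \<in> carrier (SL2_Zinv n)" by (simp add: W1_def carrier_mk)
lemma Wm_in[simp]: "Wm \<in> carrier (SL2_Zinv n)" by (simp add: Wm_def carrier_mk)
lemma H_in: "u \<in> Zinv n \<Longrightarrow> 1 / u \<in> Zinv n \<Longrightarrow> u \<noteq> 0 \<Longrightarrow> H u \<in> carrier (SL2_Zinv n)"
  by (simp add: H_def carrier_mk)

lemma gens_sub: "gens \<subseteq> carrier (SL2_Zinv n)"
  unfolding gens_def by auto

lemma S_E: "x \<in> Zinv n \<Longrightarrow> E x \<in> S"
  by (rule generate.incl) (auto simp: gens_def)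
lemma S_F: "x \<in> Zinv n \<Longrightarrow> F x \<in> S"
  by (rule generate.incl) (auto simp: gens_def)
lemma S_mult: "P \<in> S \<Longrightarrow> P2 \<in> S \<Longrightarrow> P ** P2 \<in> S"
  by (metis generate.eng mult_SL)

lemma gen_aux: "\<forall>A. A \<in> carrier (SL2_Zinv n) \<longrightarrow> mu n (A$2$1) = m \<longrightarrow> A \<in> S"
proof (induction m rule: less_induct)
  case (less m)
  show ?case
  proof (intro allI impI)
    fix A assume A: "A \<in> carrier (SL2_Zinv n)" and mA: "mu n (A$2$1) = m"
    obtain a b c d where Ae: "A = mk a b c d" and h: "a \<in> Zinv n" "b \<in> Zinv n" "c \<in> Zinv n" "d \<in> Zinv n"
      "a * d - b * c = 1"
      using carrier_SL_mk[OF A] by blast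
    have R: "(1::rat) \<in> Zinv n" "(-1::rat) \<in> Zinv n" by simp_all
    show "A \<in> S"
    proof (cases "c = 0")
      case True
      then have ad: "a * d = 1" using h by simp
      then have a0: "a \<noteq> 0" by auto
      have dd: "d = 1 / a" using ad a0 by (simp add: eq_divide_eq mult.commute)
      have w: "E (-1) ** F 1 ** E (-1) = mk 0 (-1) 1 0"
        by (simp add: E_def F_def mk_mult)
      have 1: "E a ** F (-d) ** E a = mk 0 a (-d) 0"
        using a0 by (simp add: E_def F_def mk_mult mk_eq dd field_simps)
      have 2: "mk 0 a (-d) 0 ** mk 0 (-1) 1 0 ** E (b * d) = A"
        using a0 True by (simp add: E_def mk_mult mk_eq Ae dd)
      have eq: "A = (E a ** F (-d) ** E a) ** (E (-1) ** F 1 ** E (-1)) ** E (b * d)"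
        using 1 2 w by simp
      show ?thesis unfolding eq using h R
        by (intro S_mult S_E S_F) simp_all
    next
      case False
      obtain q where q: "q \<in> Zinv n" "mu n (a - q * c) < mu n c"
        using euclid[OF n0 h(1) h(3) False] by blast
      define A' where "A' = mk c d (-(a - q * c)) (-(b - q * d))"
      have A'c: "A' \<in> carrier (SL2_Zinv n)"
        unfolding A'_def carrier_mk using h q n0
        by (simp add: algebra_simps)
      have "mu n (A'$2$1) < m" using q mA Ae by (simp add: A'_def mu_swap)
      then have A'S: "A' \<in> S" using less A'c by blast
      have w: "E (-1) ** F 1 ** E (-1) = mk 0 (-1) 1 0"
        by (simp add: E_def F_def mk_mult)
      have 3: "E q ** (mk 0 (-1) 1 0 ** A') = A"
        by (simp add: Ae E_def A'_def mk_mult mk_eq algebra_simps)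
      have eq: "A = E q ** ((E (-1) ** F 1 ** E (-1)) ** A')"
        using w 3 by simp
      show ?thesis unfolding eq using h R q A'S
        by (intro S_mult S_E S_F) simp_all
    qed
  qed
qed

lemma generation: "A \<in> carrier (SL2_Zinv n) \<Longrightarrow> A \<in> S"
  using gen_aux by blast

end


declare mult_FactGroup[simp del] one_FactGroup[simp del]

lemma E_add: "E x ** E y = E (x + y)" by (simp add: E_def mk_mult add.commute)
lemma E_0: "E 0 = mat 1" by (simp add: E_def mat1_mk)
lemma F_add: "F x ** F y = F (x + y)" by (simp add: F_def mk_mult add.commute)
lemma F_0: "F 0 = mat 1" by (simp add: F_def mat1_mk)

context SLn
begin

abbreviation "D \<equiv> derived (SL2_Zinv n) (carrier (SL2_Zinv n))"
abbreviation "Q \<equiv> SL2_Zinv n Mod D"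

definition pi :: "rat^2^2 \<Rightarrow> (rat^2^2) set" where
  "pi A = r_coset (SL2_Zinv n) D A"

definition psi :: "rat \<Rightarrow> (rat^2^2) set" where
  "psi x = pi (E x)"

lemma D_normal: "D \<lhd> SL2_Zinv n" by (rule grp.derived_self_is_normal)
lemma D_sub: "subgroup D (SL2_Zinv n)" using D_normal by (rule normal_imp_subgroup)

sublocale Qc: comm_group Q by (rule grp.derived_quot_is_comm_group)

lemma pi_hom: "pi \<in> hom (SL2_Zinv n) Q"
  unfolding pi_def using normal.r_coset_hom_Mod[OF D_normal] by simp

sublocale pih: group_hom "SL2_Zinv n" Q pi
  by (intro group_hom.intro group_hom_axioms.intro grp.group_axioms Qc.group_axioms pi_hom)

lemma pi_mult: "A \<in> carrier (SL2_Zinv n) \<Longrightarrow> B \<in> carrier (SL2_Zinv n) \<Longrightarrow> pi (A ** B) = pi A \<otimes>\<^bsub>Q\<^esub> pi B"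
  using pih.hom_mult by simp

lemma pi_carrier[simp]: "A \<in> carrier (SL2_Zinv n) \<Longrightarrow> pi A \<in> carrier Q"
  by simp

lemma pi_one: "pi (mat 1) = \<one>\<^bsub>Q\<^esub>"
  using pih.hom_one by simp

lemma mult_closed[simp]: "A \<in> carrier (SL2_Zinv n) \<Longrightarrow> B \<in> carrier (SL2_Zinv n) \<Longrightarrow> A ** B \<in> carrier (SL2_Zinv n)"
  using grp.m_closed by simp

lemma pi_conj:
  assumes A: "A \<in> carrier (SL2_Zinv n)" and B: "B \<in> carrier (SL2_Zinv n)" and C: "C \<in> carrier (SL2_Zinv n)"
    and BC: "B ** C = mat 1"
  shows "pi (B ** A ** C) = pi A"
proof -
  have "pi (B ** A ** C) = pi B \<otimes>\<^bsub>Q\<^esub> pi A \<otimes>\<^bsub>Q\<^esub> pi C"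
    using A B C by (simp add: pi_mult)
  also have "\<dots> = pi A \<otimes>\<^bsub>Q\<^esub> (pi B \<otimes>\<^bsub>Q\<^esub> pi C)"
    using A B C by (simp add: Qc.m_ac)
  also have "pi B \<otimes>\<^bsub>Q\<^esub> pi C = \<one>\<^bsub>Q\<^esub>"
    using B C BC by (simp add: pi_mult[symmetric] pi_one)
  finally show ?thesis using A by simp
qed

lemma psi_carrier[simp]: "x \<in> Zinv n \<Longrightarrow> psi x \<in> carrier Q"
  by (simp add: psi_def)

lemma psi_add: "x \<in> Zinv n \<Longrightarrow> y \<in> Zinv n \<Longrightarrow> psi (x + y) = psi x \<otimes>\<^bsub>Q\<^esub> psi y"
  unfolding psi_def by (simp add: pi_mult[symmetric] E_add)

lemma psi_0: "psi 0 = \<one>\<^bsub>Q\<^esub>"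
  by (simp add: psi_def E_0 pi_one)

lemma pi_F: assumes "x \<in> Zinv n" shows "pi (F x) = psi (-x)"
proof -
  have "W1 ** E (-x) ** Wm = F x" by (simp add: W1_def Wm_def E_def F_def mk_mult)
  moreover have "W1 ** Wm = mat 1" by (simp add: W1_def Wm_def mk_mult mat1_mk)
  ultimately show ?thesis unfolding psi_def using pi_conj[of "E (-x)" W1 Wm] assms by simp
qed

lemma psi_sq:
  assumes u: "u \<in> Zinv n" "1 / u \<in> Zinv n" "u \<noteq> 0" and x: "x \<in> Zinv n"
  shows "psi (u ^ 2 * x) = psi x"
proof -
  have "H u ** E x ** H (1 / u) = E (u ^ 2 * x)"
    using u by (simp add: H_def E_def mk_mult power2_eq_square mult_ac)
  moreover have "H u ** H (1 / u) = mat 1" using u by (simp add: H_def mk_mult mat1_mk)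
  moreover have "H (1 / u) \<in> carrier (SL2_Zinv n)" using u by (intro H_in) simp_all
  ultimately show ?thesis unfolding psi_def using pi_conj[of "E x" "H u" "H (1 / u)"] u x H_in
    by simp
qed

lemma psi_nat: "psi (of_nat m) = psi 1 [^]\<^bsub>Q\<^esub> m"
proof (induction m)
  case 0
  then show ?case by (simp add: psi_0)
next
  case (Suc m)
  have "psi (of_nat (Suc m)) = psi (of_nat m + 1)" by (simp add: add.commute)
  also have "\<dots> = psi (of_nat m) \<otimes>\<^bsub>Q\<^esub> psi 1" by (rule psi_add) simp_all
  finally show ?case using Suc by simp
qed

lemma psi_numeral: "psi (numeral k) = psi 1 [^]\<^bsub>Q\<^esub> (numeral k :: nat)"
  using psi_nat[of "numeral k"] by simp

lemma psi_neg: assumes "x \<in> Zinv n" shows "psi (- x) = inv\<^bsub>Q\<^esub> psi x"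
proof -
  have "psi (- x) \<otimes>\<^bsub>Q\<^esub> psi x = \<one>\<^bsub>Q\<^esub>"
    using psi_add[of "-x" x] assms by (simp add: psi_0)
  then show ?thesis using assms by (intro Qc.inv_equality[symmetric]) simp_all
qed

lemma psi_int: "psi (of_int z) = psi 1 [^]\<^bsub>Q\<^esub> z"
proof (cases "z \<ge> 0")
  case True
  then have "z = int (nat z)" by simp
  then have "psi (of_int z) = psi (of_nat (nat z))" by (metis of_int_of_nat_eq)
  also have "\<dots> = psi 1 [^]\<^bsub>Q\<^esub> (nat z)" by (rule psi_nat)
  also have "\<dots> = psi 1 [^]\<^bsub>Q\<^esub> z" using True by (metis int_pow_int \<open>z = int (nat z)\<close>)
  finally show ?thesis .
next
  case False
  then have z: "z = - int (nat (- z))" by simp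
  have "psi (of_int z) = psi (- of_nat (nat (- z)))" by (subst z) simp
  also have "\<dots> = inv\<^bsub>Q\<^esub> (psi 1 [^]\<^bsub>Q\<^esub> (nat (- z)))" by (simp add: psi_neg psi_nat)
  also have "\<dots> = psi 1 [^]\<^bsub>Q\<^esub> z" by (subst (2) z, subst Qc.int_pow_neg_int) simp_all
  finally show ?thesis .
qed

lemma psi_pow: assumes "x \<in> Zinv n" shows "\<exists>k::int. psi x = psi 1 [^]\<^bsub>Q\<^esub> k"
proof -
  obtain a j where x: "x = of_int a / of_nat n ^ j" using assms by (rule ZinvE)
  define u :: rat where "u = of_nat n ^ j"
  have u: "u \<in> Zinv n" "1 / u \<in> Zinv n" "u \<noteq> 0" using n0 by (simp_all add: u_def)
  have "u ^ 2 * x = of_int (a * int n ^ j)"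
    using u(3) by (simp add: x u_def power2_eq_square)
  then have "psi x = psi (of_int (a * int n ^ j))" using psi_sq[OF u assms] by simp
  then show ?thesis using psi_int by metis
qed

lemma pi_pow: assumes "A \<in> carrier (SL2_Zinv n)" shows "\<exists>k::int. pi A = psi 1 [^]\<^bsub>Q\<^esub> k"
proof -
  have "A \<in> S" using generation[OF assms] .
  then show ?thesis
  proof (induction rule: generate.induct)
    case one
    then show ?case by (intro exI[of _ 0]) (simp add: pi_one)
  next
    case (incl h)
    then show ?case
    proof (auto simp: gens_def)
      fix x assume "x \<in> Zinv n"
      then show "\<exists>k::int. pi (E x) = psi 1 [^]\<^bsub>Q\<^esub> k" using psi_pow unfolding psi_def by blast
    next
      fix x assume "x \<in> Zinv n"
      then show "\<exists>k::int. pi (F x) = psi 1 [^]\<^bsub>Q\<^esub> k" using psi_pow[of "-x"] pi_F by simp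
    qed
  next
    case (inv h)
    then have hc: "h \<in> carrier (SL2_Zinv n)" using gens_sub by auto
    have "\<exists>k::int. pi h = psi 1 [^]\<^bsub>Q\<^esub> k"
      using inv psi_pow[of _] pi_F unfolding gens_def psi_def
      by (auto simp del: pih.hom_inv)
    then obtain k :: int where k: "pi h = psi 1 [^]\<^bsub>Q\<^esub> k" by blast
    have "pi (inv\<^bsub>SL2_Zinv n\<^esub> h) = inv\<^bsub>Q\<^esub> (pi h)" using hc by simp
    also have "\<dots> = psi 1 [^]\<^bsub>Q\<^esub> (- k)" using k by (simp add: Qc.int_pow_neg)
    finally show ?case by blast
  next
    case (eng h1 h2)
    have c: "h1 \<in> carrier (SL2_Zinv n)" "h2 \<in> carrier (SL2_Zinv n)"
      using eng(1,2) grp.generate_in_carrier[OF gens_sub] by auto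
    obtain k1 k2 :: int where "pi h1 = psi 1 [^]\<^bsub>Q\<^esub> k1" "pi h2 = psi 1 [^]\<^bsub>Q\<^esub> k2"
      using eng by blast
    then have "pi (h1 \<otimes>\<^bsub>SL2_Zinv n\<^esub> h2) = psi 1 [^]\<^bsub>Q\<^esub> (k1 + k2)"
      using c by (simp add: Qc.int_pow_mult pi_mult)
    then show ?case by blast
  qed
qed

lemma pi_W1: "pi W1 = psi 1 [^]\<^bsub>Q\<^esub> (3::nat)"
proof -
  have e: "W1 = E 1 ** F (-1) ** E 1" by (simp add: W1_def E_def F_def mk_mult)
  have f: "pi (F (-1)) = psi 1" using pi_F[of "-1"] by simp
  have "pi W1 = pi (E 1) \<otimes>\<^bsub>Q\<^esub> pi (F (-1)) \<otimes>\<^bsub>Q\<^esub> pi (E 1)"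
    unfolding e by (simp add: pi_mult)
  then have "pi W1 = psi 1 \<otimes>\<^bsub>Q\<^esub> psi 1 \<otimes>\<^bsub>Q\<^esub> psi 1"
    unfolding f psi_def .
  then show ?thesis by (simp add: numeral_eq_Suc)
qed

lemma rel12: "psi 1 [^]\<^bsub>Q\<^esub> (12::nat) = \<one>\<^bsub>Q\<^esub>"
proof -
  have "W1 ** W1 ** W1 ** W1 = mat 1" by (simp add: W1_def mk_mult mat1_mk)
  then have "\<one>\<^bsub>Q\<^esub> = pi W1 \<otimes>\<^bsub>Q\<^esub> pi W1 \<otimes>\<^bsub>Q\<^esub> pi W1 \<otimes>\<^bsub>Q\<^esub> pi W1"
    by (metis pi_one pi_mult W1_in mult_closed)
  also have "\<dots> = psi 1 [^]\<^bsub>Q\<^esub> (3 + 3 + 3 + 3 :: nat)"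
    unfolding pi_W1 by (simp only: Qc.nat_pow_mult psi_carrier Zinv_1)
  finally show ?thesis by simp
qed

lemma half_in: assumes "2 dvd n" shows "1 / 2 \<in> Zinv n"
proof -
  obtain t where t: "n = 2 * t" using assms by blast
  then have "t > 0" using n0 by simp
  then have "(1 / 2 :: rat) = of_int (int t) / of_nat n ^ 1" by (simp add: t)
  then show ?thesis by (rule ZinvI)
qed

lemma third_in: assumes "3 dvd n" shows "1 / 3 \<in> Zinv n"
proof -
  obtain t where t: "n = 3 * t" using assms by blast
  then have "t > 0" using n0 by simp
  then have "(1 / 3 :: rat) = of_int (int t) / of_nat n ^ 1" by (simp add: t)
  then show ?thesis by (rule ZinvI)
qed

lemma rel2: assumes "2 dvd n" shows "psi 1 [^]\<^bsub>Q\<^esub> (3::nat) = \<one>\<^bsub>Q\<^esub>"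
proof -
  have "psi ((2::rat) ^ 2 * 1) = psi 1" using half_in[OF assms] by (intro psi_sq) simp_all
  then have "psi 1 [^]\<^bsub>Q\<^esub> (4::nat) = psi 1" by (simp add: psi_numeral)
  then have "psi 1 [^]\<^bsub>Q\<^esub> (3::nat) \<otimes>\<^bsub>Q\<^esub> psi 1 = psi 1"
    by (simp add: numeral_eq_Suc)
  then show ?thesis by simp
qed

lemma rel3: assumes "3 dvd n" shows "psi 1 [^]\<^bsub>Q\<^esub> (4::nat) = \<one>\<^bsub>Q\<^esub>"
proof -
  have "psi ((3::rat) ^ 2 * 1) = psi 1" using third_in[OF assms] by (intro psi_sq) simp_all
  then have "psi 1 [^]\<^bsub>Q\<^esub> (9::nat) = psi 1" by (simp add: psi_numeral)
  then have "psi 1 [^]\<^bsub>Q\<^esub> (8::nat) \<otimes>\<^bsub>Q\<^esub> psi 1 = psi 1"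
    by (simp add: numeral_eq_Suc)
  then have 8: "psi 1 [^]\<^bsub>Q\<^esub> (8::nat) = \<one>\<^bsub>Q\<^esub>" by simp
  have "psi 1 [^]\<^bsub>Q\<^esub> (8::nat) \<otimes>\<^bsub>Q\<^esub> psi 1 [^]\<^bsub>Q\<^esub> (4::nat) = \<one>\<^bsub>Q\<^esub>"
    using rel12 by (simp only: Qc.nat_pow_mult psi_carrier Zinv_1) simp
  then show ?thesis using 8 by simp
qed

end


declare mult_FactGroup[simp del] one_FactGroup[simp del]

definition phi :: "nat \<Rightarrow> nat \<Rightarrow> rat^2^2 \<Rightarrow> int" where
  "phi M n A = chi M (red M n (A$1$1)) (red M n (A$1$2)) (red M n (A$2$1)) (red M n (A$2$2))"

lemma chi_iterE_nat:
  assumes M: "M = 3 \<or> M = 4" and det: "[a * d - b * c = 1] (mod int M)"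
  shows "chi M a (a * int m + b) c (c * int m + d) = (chi M a b c d + int m) mod int M"
proof (induction m)
  case 0
  show ?case using chi_range[OF M, of a b c d] by simp
next
  case (Suc m)
  have det': "[a * (c * int m + d) - (a * int m + b) * c = 1] (mod int M)"
    using det by (simp add: algebra_simps)
  have "chi M a (a * int (Suc m) + b) c (c * int (Suc m) + d) = chi M a (a + (a * int m + b)) c (c + (c * int m + d))"
    by (simp add: algebra_simps)
  also have "\<dots> = (chi M a (a * int m + b) c (c * int m + d) + 1) mod int M"
    by (rule chi_stepE[OF M det'])
  also have "\<dots> = (chi M a b c d + int (Suc m)) mod int M"
    using Suc by (simp add: mod_simps ac_simps)
  finally show ?case .
qed

lemma chi_iterF_nat:
  assumes M: "M = 3 \<or> M = 4" and det: "[a * d - b * c = 1] (mod int M)"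
  shows "chi M (a + b * int m) b (c + d * int m) d = (chi M a b c d - int m) mod int M"
proof (induction m)
  case 0
  show ?case using chi_range[OF M, of a b c d] by simp
next
  case (Suc m)
  have det': "[(a + b * int m) * d - b * (c + d * int m) = 1] (mod int M)"
    using det by (simp add: algebra_simps)
  have "chi M (a + b * int (Suc m)) b (c + d * int (Suc m)) d = chi M ((a + b * int m) + b) b ((c + d * int m) + d) d"
    by (simp add: algebra_simps)
  also have "\<dots> = (chi M (a + b * int m) b (c + d * int m) d - 1) mod int M"
    by (rule chi_stepF[OF M det'])
  also have "\<dots> = (chi M a b c d - int (Suc m)) mod int M"
    using Suc by (simp add: mod_simps algebra_simps)
  finally show ?case .
qed

lemma chi_iterE:
  assumes M: "M = 3 \<or> M = 4" and det: "[a * d - b * c = 1] (mod int M)"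
  shows "chi M a (a * t + b) c (c * t + d) = (chi M a b c d + t) mod int M"
proof -
  define m where "m = nat (t mod int M)"
  have tm: "int m = t mod int M" using M by (auto simp: m_def)
  have ct: "[t = int m] (mod int M)" by (simp add: tm cong_def)
  have "chi M a (a * t + b) c (c * t + d) = chi M a (a * int m + b) c (c * int m + d)"
    using M ct by (intro chi_cong cong_add cong_mult cong_refl) auto
  also have "\<dots> = (chi M a b c d + int m) mod int M" by (rule chi_iterE_nat[OF M det])
  also have "\<dots> = (chi M a b c d + t) mod int M" by (simp add: tm mod_simps)
  finally show ?thesis .
qed

lemma chi_iterF:
  assumes M: "M = 3 \<or> M = 4" and det: "[a * d - b * c = 1] (mod int M)"
  shows "chi M (a + b * t) b (c + d * t) d = (chi M a b c d - t) mod int M"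
proof -
  define m where "m = nat (t mod int M)"
  have tm: "int m = t mod int M" using M by (auto simp: m_def)
  have ct: "[t = int m] (mod int M)" by (simp add: tm cong_def)
  have "chi M (a + b * t) b (c + d * t) d = chi M (a + b * int m) b (c + d * int m) d"
    using M ct by (intro chi_cong cong_add cong_mult cong_refl) auto
  also have "\<dots> = (chi M a b c d - int m) mod int M" by (rule chi_iterF_nat[OF M det])
  also have "\<dots> = (chi M a b c d - t) mod int M" by (simp add: tm mod_simps)
  finally show ?thesis .
qed

context SLn
begin

lemma hom_from_gens:
  assumes m0: "m > 0"
    and range: "\<And>A. A \<in> carrier (SL2_Zinv n) \<Longrightarrow> 0 \<le> f A \<and> f A < int m"
    and f1: "f (mat 1) = 0"
    and fE: "\<And>A x. A \<in> carrier (SL2_Zinv n) \<Longrightarrow> x \<in> Zinv n \<Longrightarrow> f (A ** E x) = (f A + f (E x)) mod int m"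
    and fF: "\<And>A x. A \<in> carrier (SL2_Zinv n) \<Longrightarrow> x \<in> Zinv n \<Longrightarrow> f (A ** F x) = (f A + f (F x)) mod int m"
  shows "f \<in> hom (SL2_Zinv n) (integer_mod_group m)"
proof -
  have invE: "inv\<^bsub>SL2_Zinv n\<^esub> (E x) = E (-x)" if "x \<in> Zinv n" for x
    using that by (intro grp.inv_equality) (simp_all add: E_add E_0)
  have invF: "inv\<^bsub>SL2_Zinv n\<^esub> (F x) = F (-x)" if "x \<in> Zinv n" for x
    using that by (intro grp.inv_equality) (simp_all add: F_add F_0)
  have key: "\<forall>A\<in>carrier (SL2_Zinv n). f (A ** B) = (f A + f B) mod int m" if "B \<in> S" for B
    using that
  proof (induction B rule: generate.induct)
    case one
    show ?case using range by (simp add: f1)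
  next
    case (incl h)
    then show ?case using fE fF by (auto simp: gens_def)
  next
    case (inv h)
    then show ?case using fE fF invE invF by (auto simp: gens_def)
  next
    case (eng h1 h2)
    have c: "h1 \<in> carrier (SL2_Zinv n)" "h2 \<in> carrier (SL2_Zinv n)"
      using eng(1,2) grp.generate_in_carrier[OF gens_sub] by auto
    show ?case
    proof
      fix A assume A: "A \<in> carrier (SL2_Zinv n)"
      have "f (A ** (h1 ** h2)) = f ((A ** h1) ** h2)" by (simp add: matrix_mul_assoc)
      also have "\<dots> = (f (A ** h1) + f h2) mod int m" using eng(4) A c by simp
      also have "\<dots> = ((f A + f h1) mod int m + f h2) mod int m" using eng(3) A by simp
      also have "\<dots> = (f A + (f h1 + f h2) mod int m) mod int m" by (simp add: mod_simps ac_simps)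
      also have "(f h1 + f h2) mod int m = f (h1 ** h2)" using eng(4) c by simp
      finally show "f (A ** (h1 \<otimes>\<^bsub>SL2_Zinv n\<^esub> h2)) = (f A + f (h1 \<otimes>\<^bsub>SL2_Zinv n\<^esub> h2)) mod int m"
        by simp
    qed
  qed
  show ?thesis
    unfolding hom_def using m0 range key[OF generation]
    by (auto simp: carrier_integer_mod_group Pi_def)
qed

lemma phi_hom:
  assumes M: "M = 3 \<or> M = 4" and cop: "coprime (int n) (int M)"
  shows "phi M n \<in> hom (SL2_Zinv n) (integer_mod_group M)" and "phi M n (E 1) = 1"
proof -
  interpret redloc M n using n0 cop by unfold_locales
  have r1: "[r 1 = 1] (mod int M)" using red_int[of 1] by simp
  have r0: "[r 0 = 0] (mod int M)" using red_int[of 0] by simp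
  have rlin: "[r (a * x + b) = r a * r x + r b] (mod int M)"
    if "a \<in> Zinv n" "x \<in> Zinv n" "b \<in> Zinv n" for a x b
  proof -
    have "[r (a * x + b) = r (a * x) + r b] (mod int M)" using that n0 by (intro red_add) simp_all
    also have "[r (a * x) + r b = r a * r x + r b] (mod int M)"
      using that by (intro cong_add red_mult cong_refl)
    finally show ?thesis .
  qed
  have det: "[r a * r d - r b * r c = 1] (mod int M)"
    if "a \<in> Zinv n" "b \<in> Zinv n" "c \<in> Zinv n" "d \<in> Zinv n" "a * d - b * c = 1" for a b c d
  proof -
    have "[r a * r d - r b * r c = r (a * d) - r (b * c)] (mod int M)"
      using that by (intro cong_diff) (simp_all add: red_mult cong_sym)
    also have "[r (a * d) - r (b * c) = r (a * d - b * c)] (mod int M)"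
      using that n0 by (intro cong_sym[OF red_diff]) simp_all
    also have "r (a * d - b * c) = r 1" using that by simp
    finally show ?thesis using r1 by (rule cong_trans)
  qed
  have rng: "0 \<le> phi M n A \<and> phi M n A < int M" for A
    unfolding phi_def by (rule chi_range[OF M])
  have f1: "phi M n (mat 1) = 0"
  proof -
    have "phi M n (mat 1) = chi M 1 0 0 1"
      unfolding phi_def mat1_mk using r0 r1 by (intro chi_cong[OF M]) simp_all
    then show ?thesis using chi_id[OF M] by simp
  qed
  have fEx: "phi M n (E x) = r x mod int M" if x: "x \<in> Zinv n" for x
  proof -
    have "phi M n (E x) = chi M 1 (1 * r x + 0) 0 (0 * r x + 1)"
      unfolding phi_def E_def using r0 r1 by (intro chi_cong[OF M]) simp_all
    also have "\<dots> = (chi M 1 0 0 1 + r x) mod int M" by (rule chi_iterE[OF M]) simp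
    finally show ?thesis using chi_id[OF M] by simp
  qed
  have fFx: "phi M n (F x) = (- r x) mod int M" if x: "x \<in> Zinv n" for x
  proof -
    have "phi M n (F x) = chi M (1 + 0 * r x) 0 (0 + 1 * r x) 1"
      unfolding phi_def F_def using r0 r1 by (intro chi_cong[OF M]) simp_all
    also have "\<dots> = (chi M 1 0 0 1 - r x) mod int M" by (rule chi_iterF[OF M]) simp
    finally show ?thesis using chi_id[OF M] by simp
  qed
  have fE: "phi M n (A ** E x) = (phi M n A + phi M n (E x)) mod int M"
    if A: "A \<in> carrier (SL2_Zinv n)" and x: "x \<in> Zinv n" for A x
  proof -
    obtain a b c d where Ae: "A = mk a b c d" and h: "a \<in> Zinv n" "b \<in> Zinv n" "c \<in> Zinv n" "d \<in> Zinv n"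
      "a * d - b * c = 1"
      using carrier_SL_mk[OF A] by blast
    have "A ** E x = mk a (a * x + b) c (c * x + d)" by (simp add: Ae E_def mk_mult)
    then have "phi M n (A ** E x) = chi M (r a) (r (a * x + b)) (r c) (r (c * x + d))"
      by (simp add: phi_def)
    also have "\<dots> = chi M (r a) (r a * r x + r b) (r c) (r c * r x + r d)"
      using h x by (intro chi_cong[OF M] rlin cong_refl)
    also have "\<dots> = (chi M (r a) (r b) (r c) (r d) + r x) mod int M"
      by (rule chi_iterE[OF M det[OF h]])
    also have "\<dots> = (phi M n A + phi M n (E x)) mod int M"
      unfolding fEx[OF x] by (simp add: Ae phi_def mod_simps)
    finally show ?thesis .
  qed
  have fF: "phi M n (A ** F x) = (phi M n A + phi M n (F x)) mod int M"
    if A: "A \<in> carrier (SL2_Zinv n)" and x: "x \<in> Zinv n" for A x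
  proof -
    obtain a b c d where Ae: "A = mk a b c d" and h: "a \<in> Zinv n" "b \<in> Zinv n" "c \<in> Zinv n" "d \<in> Zinv n"
      "a * d - b * c = 1"
      using carrier_SL_mk[OF A] by blast
    have "A ** F x = mk (b * x + a) b (d * x + c) d" by (simp add: Ae F_def mk_mult add.commute)
    then have "phi M n (A ** F x) = chi M (r (b * x + a)) (r b) (r (d * x + c)) (r d)"
      by (simp add: phi_def)
    have l1: "[r (b * x + a) = r a + r b * r x] (mod int M)"
      using rlin[OF h(2) x h(1)] by (simp add: ac_simps)
    have l2: "[r (d * x + c) = r c + r d * r x] (mod int M)"
      using rlin[OF h(4) x h(3)] by (simp add: ac_simps)
    note \<open>phi M n (A ** F x) = chi M (r (b * x + a)) (r b) (r (d * x + c)) (r d)\<close>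
    also have "chi M (r (b * x + a)) (r b) (r (d * x + c)) (r d) = chi M (r a + r b * r x) (r b) (r c + r d * r x) (r d)"
      by (rule chi_cong[OF M l1 cong_refl l2 cong_refl])
    also have "\<dots> = (chi M (r a) (r b) (r c) (r d) - r x) mod int M"
      by (rule chi_iterF[OF M det[OF h]])
    also have "\<dots> = (phi M n A + phi M n (F x)) mod int M"
      unfolding fFx[OF x] by (simp add: Ae phi_def mod_simps)
    finally show ?thesis .
  qed
  show "phi M n \<in> hom (SL2_Zinv n) (integer_mod_group M)"
    using M rng f1 fE fF by (intro hom_from_gens) auto
  have "phi M n (E 1) = chi M 1 1 0 1"
    unfolding phi_def E_def using r0 r1 by (intro chi_cong[OF M]) simp_all
  then show "phi M n (E 1) = 1" using M by (auto simp: chi_def chi3_def chi4_def)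
qed

lemma main_iso:
  assumes m0: "m > 0" and fh: "f \<in> hom (SL2_Zinv n) (integer_mod_group m)"
    and fE1: "f (E 1) = 1 mod int m" and rel: "psi 1 [^]\<^bsub>Q\<^esub> m = \<one>\<^bsub>Q\<^esub>"
  shows "abelianization (SL2_Zinv n) \<cong> integer_mod_group m"
proof -
  interpret fh: group_hom "SL2_Zinv n" "integer_mod_group m" f
    by (intro group_hom.intro group_hom_axioms.intro grp.group_axioms group_integer_mod_group fh)
  have E1c: "E 1 \<in> carrier (SL2_Zinv n)" by simp
  have fpow: "f (E 1 [^]\<^bsub>SL2_Zinv n\<^esub> (k::int)) = k mod int m" for k
    using fh.hom_int_pow[OF E1c, of k] fE1 by (simp add: int_pow_integer_mod_group mod_simps)
  have fcar: "f A \<in> {0..<int m}" if "A \<in> carrier (SL2_Zinv n)" for A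
    using fh.hom_closed[OF that] m0 by (simp add: carrier_integer_mod_group)
  have Dk: "D \<subseteq> kernel (SL2_Zinv n) (integer_mod_group m) f"
    unfolding derived_def
  proof (rule grp.generate_subgroup_incl[OF _ fh.subgroup_kernel])
    show "derived_set (SL2_Zinv n) (carrier (SL2_Zinv n)) \<subseteq> kernel (SL2_Zinv n) (integer_mod_group m) f"
    proof (clarify)
      fix h1 h2 assume h: "h1 \<in> carrier (SL2_Zinv n)" "h2 \<in> carrier (SL2_Zinv n)"
      let ?x = "h1 \<otimes>\<^bsub>SL2_Zinv n\<^esub> h2 \<otimes>\<^bsub>SL2_Zinv n\<^esub> inv\<^bsub>SL2_Zinv n\<^esub> h1 \<otimes>\<^bsub>SL2_Zinv n\<^esub> inv\<^bsub>SL2_Zinv n\<^esub> h2"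
      have xc: "?x \<in> carrier (SL2_Zinv n)" using h by (intro grp.m_closed grp.inv_closed) auto
      have "f ?x = ((((f h1 + f h2) mod int m + (- f h1) mod int m) mod int m + (- f h2) mod int m) mod int m)"
        using h fcar by (simp add: fh.hom_mult[symmetric] del: mult_SL)
      also have "\<dots> = 0" by (simp add: mod_simps)
      finally show "?x \<in> kernel (SL2_Zinv n) (integer_mod_group m) f"
        using xc by (simp add: kernel_def)
    qed
  qed
  have kD: "kernel (SL2_Zinv n) (integer_mod_group m) f \<subseteq> D"
  proof
    fix A assume "A \<in> kernel (SL2_Zinv n) (integer_mod_group m) f"
    then have A: "A \<in> carrier (SL2_Zinv n)" and fA: "f A = 0" by (auto simp: kernel_def)
    obtain k :: int where pk: "pi A = psi 1 [^]\<^bsub>Q\<^esub> k" using pi_pow[OF A] by blast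
    define B where "B = E 1 [^]\<^bsub>SL2_Zinv n\<^esub> k"
    have Bc: "B \<in> carrier (SL2_Zinv n)" unfolding B_def by simp
    have pB: "pi B = psi 1 [^]\<^bsub>Q\<^esub> k" unfolding B_def psi_def using pih.hom_int_pow[OF E1c] by simp
    have "A \<in> pi A" unfolding pi_def using grp.rcos_self[OF A D_sub] .
    then have "A \<in> r_coset (SL2_Zinv n) D B" using pk pB by (simp add: pi_def)
    then have AB: "A \<otimes>\<^bsub>SL2_Zinv n\<^esub> inv\<^bsub>SL2_Zinv n\<^esub> B \<in> D"
      using subgroup.rcos_module_imp[OF D_sub grp.is_group Bc] by blast
    then have "f (A \<otimes>\<^bsub>SL2_Zinv n\<^esub> inv\<^bsub>SL2_Zinv n\<^esub> B) = 0" using Dk by (auto simp: kernel_def)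
    then have "(f A + (- f B) mod int m) mod int m = 0"
      using A Bc fcar by (simp add: fh.hom_mult[symmetric] del: mult_SL)
    then have "(- k) mod int m = 0" using fA by (simp add: B_def fpow mod_simps)
    then have "int m dvd k" by (simp add: mod_eq_0_iff_dvd)
    then obtain t where kt: "k = int m * t" by blast
    have "psi 1 [^]\<^bsub>Q\<^esub> k = (psi 1 [^]\<^bsub>Q\<^esub> (int m)) [^]\<^bsub>Q\<^esub> t"
      unfolding kt by (simp add: Qc.int_pow_pow)
    also have "\<dots> = \<one>\<^bsub>Q\<^esub>" by (simp add: int_pow_int rel)
    finally have "pi A = D" using pk by (simp add: one_FactGroup)
    then show "A \<in> D" using \<open>A \<in> pi A\<close> by simp
  qed
  have surj: "f ` carrier (SL2_Zinv n) = carrier (integer_mod_group m)"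
  proof
    show "f ` carrier (SL2_Zinv n) \<subseteq> carrier (integer_mod_group m)" using fh.hom_closed by auto
    show "carrier (integer_mod_group m) \<subseteq> f ` carrier (SL2_Zinv n)"
    proof
      fix j assume "j \<in> carrier (integer_mod_group m)"
      then have j: "0 \<le> j" "j < int m" using m0 by (auto simp: carrier_integer_mod_group)
      have "f (E 1 [^]\<^bsub>SL2_Zinv n\<^esub> j) = j" using j by (simp add: fpow)
      moreover have "E 1 [^]\<^bsub>SL2_Zinv n\<^esub> j \<in> carrier (SL2_Zinv n)" by simp
      ultimately show "j \<in> f ` carrier (SL2_Zinv n)" by (metis image_eqI)
    qed
  qed
  have "kernel (SL2_Zinv n) (integer_mod_group m) f = D" using Dk kD by blast
  then show ?thesis using fh.FactGroup_iso[OF surj] unfolding abelianization_def by simp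
qed

end


declare mult_FactGroup[simp del] one_FactGroup[simp del]

theorem mainTheorem4:
  fixes n :: nat
  assumes "n > 1"
  shows "abelianization (SL2_Zinv n) \<cong>
           integer_mod_group
             (if 2 dvd n \<and> 3 dvd n then 1
              else if 2 dvd n \<and> \<not> 3 dvd n then 3
              else if \<not> 2 dvd n \<and> 3 dvd n then 4
              else 12)"
proof -
  interpret SLn n using assms by unfold_locales
  consider (a) "2 dvd n \<and> 3 dvd n" | (b) "2 dvd n \<and> \<not> 3 dvd n"
    | (c) "\<not> 2 dvd n \<and> 3 dvd n" | (d) "\<not> 2 dvd n \<and> \<not> 3 dvd n" by blast
  then show ?thesis
  proof cases
    case a
    have hom: "(\<lambda>A. 0::int) \<in> hom (SL2_Zinv n) (integer_mod_group 1)"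
      by (auto simp: hom_def carrier_integer_mod_group Pi_def)
    have p1: "psi 1 \<in> carrier Q" by simp
    have "psi 1 [^]\<^bsub>Q\<^esub> (Suc 3) = psi 1 [^]\<^bsub>Q\<^esub> (3::nat) \<otimes>\<^bsub>Q\<^esub> psi 1"
      by (rule nat_pow_Suc)
    then have "\<one>\<^bsub>Q\<^esub> = \<one>\<^bsub>Q\<^esub> \<otimes>\<^bsub>Q\<^esub> psi 1"
      using rel2 rel3 a by (simp add: numeral_eq_Suc del: nat_pow_Suc)
    then have "psi 1 = \<one>\<^bsub>Q\<^esub>" using p1 by simp
    then have rel: "psi 1 [^]\<^bsub>Q\<^esub> (1::nat) = \<one>\<^bsub>Q\<^esub>" using p1 by simp
    have "abelianization (SL2_Zinv n) \<cong> integer_mod_group 1"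
      by (rule main_iso[OF _ hom _ rel]) simp_all
    then show ?thesis using a by simp
  next
    case b
    have cop: "coprime (int n) (int 3)" using cop3 b by simp
    have "abelianization (SL2_Zinv n) \<cong> integer_mod_group 3"
      using phi_hom[of 3, OF _ cop] rel2 b by (intro main_iso[of 3 "phi 3 n"]) simp_all
    then show ?thesis using b by simp
  next
    case c
    have cop: "coprime (int n) (int 4)" using cop4 c by simp
    have "abelianization (SL2_Zinv n) \<cong> integer_mod_group 4"
      using phi_hom[of 4, OF _ cop] rel3 c by (intro main_iso[of 4 "phi 4 n"]) simp_all
    then show ?thesis using c by simp
  next
    case d
    have cop3': "coprime (int n) (int 3)" using cop3 d by simp
    have cop4': "coprime (int n) (int 4)" using cop4 d by simp
    note h3 = phi_hom[of 3, OF _ cop3'] and h4 = phi_hom[of 4, OF _ cop4']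
    interpret g3: group_hom "SL2_Zinv n" "integer_mod_group 3" "phi 3 n"
      using h3 by (intro group_hom.intro group_hom_axioms.intro grp.group_axioms group_integer_mod_group) simp_all
    interpret g4: group_hom "SL2_Zinv n" "integer_mod_group 4" "phi 4 n"
      using h4 by (intro group_hom.intro group_hom_axioms.intro grp.group_axioms group_integer_mod_group) simp_all
    define f where "f A = (-8 * phi 3 n A + 9 * phi 4 n A) mod 12" for A
    have hom: "f \<in> hom (SL2_Zinv n) (integer_mod_group 12)"
    proof (unfold hom_def, intro CollectI conjI ballI)
      show "f \<in> carrier (SL2_Zinv n) \<rightarrow> carrier (integer_mod_group 12)"
        by (auto simp: f_def carrier_integer_mod_group Pi_def)
    next
      fix A B assume AB: "A \<in> carrier (SL2_Zinv n)" "B \<in> carrier (SL2_Zinv n)"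
      have e3: "phi 3 n (A ** B) = (phi 3 n A + phi 3 n B) mod 3"
        using g3.hom_mult[OF AB] by simp
      have e4: "phi 4 n (A ** B) = (phi 4 n A + phi 4 n B) mod 4"
        using g4.hom_mult[OF AB] by simp
      show "f (A \<otimes>\<^bsub>SL2_Zinv n\<^esub> B) = f A \<otimes>\<^bsub>integer_mod_group 12\<^esub> f B"
        by (simp only: mult_SL f_def e3 e4 mult_integer_mod_group of_nat_numeral arith12)
    qed
    have fE1: "f (E 1) = 1 mod int 12" using h3(2) h4(2) by (simp add: f_def)
    have "abelianization (SL2_Zinv n) \<cong> integer_mod_group 12"
      using hom fE1 rel12 by (intro main_iso[of 12 f]) simp_all
    then show ?thesis using d by simp
  qed
qed


end
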